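(* Let $k$ be an algebraically closed field of characteristic $0$ and let $X$ be an affine $k$-variety. Then $\mathcal{O}_{ch}(X)\subseteq ML(X)$. In particular, if $ML(X)=k$ then $\mathcal{O}_{ch}(X)=k$.
   Context: For a $k$-morphism $g:\mathbb{A}^1_k\to X$, $\mathcal{O}_{ch,g}(X)=\{f\in\mathcal{O}(X): f\circ g\text{ is constant}\}$, and $\mathcal{O}_{ch}(X)=\bigcap_{g}\mathcal{O}_{ch,g}(X)$ over all $k$-morphisms $g:\mathbb{A}^1_k\to X$. A locally nilpotent $k$-derivation of $\mathcal{O}(X)$ is a $k$-linear derivation $D$ such that every element is killed by some power of $D$; $LND_k(\mathcal{O}(X))$ denotes the set of these. The Makar-Limanov invariant is $ML(X)=\bigcap_{D\in LND_k(\mathcal{O}(X))}\ker D$. *)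

theory Defs
  imports "HOL-Computational_Algebra.Polynomial"
begin

text \<open>An affine k-variety X is represented by its coordinate ring O(X): a reduced,
finitely generated commutative k-algebra, given as a type 'b with structure map
iota : k \<rightarrow> O(X).\<close>

definition alg_closed :: "'a::field itself \<Rightarrow> bool" where
  "alg_closed _ \<longleftrightarrow> (\<forall>p::'a poly. degree p \<ge> 1 \<longrightarrow> (\<exists>x. poly p x = 0))"

definition k_algebra_map :: "('a::field \<Rightarrow> 'b::comm_ring_1) \<Rightarrow> bool" where
  "k_algebra_map iota \<longleftrightarrow> iota 1 = 1 \<and> (\<forall>a b. iota (a + b) = iota a + iota b)
     \<and> (\<forall>a b. iota (a * b) = iota a * iota b)"

inductive_set subalg_gen :: "('a::field \<Rightarrow> 'b::comm_ring_1) \<Rightarrow> 'b set \<Rightarrow> 'b set"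
  for iota S where
  scalar: "iota c \<in> subalg_gen iota S"
| gen: "x \<in> S \<Longrightarrow> x \<in> subalg_gen iota S"
| add: "x \<in> subalg_gen iota S \<Longrightarrow> y \<in> subalg_gen iota S \<Longrightarrow> x + y \<in> subalg_gen iota S"
| mult: "x \<in> subalg_gen iota S \<Longrightarrow> y \<in> subalg_gen iota S \<Longrightarrow> x * y \<in> subalg_gen iota S"

definition finitely_generated :: "('a::field \<Rightarrow> 'b::comm_ring_1) \<Rightarrow> bool" where
  "finitely_generated iota \<longleftrightarrow> (\<exists>S. finite S \<and> subalg_gen iota S = UNIV)"

definition reduced :: "'b::comm_ring_1 itself \<Rightarrow> bool" where
  "reduced _ \<longleftrightarrow> (\<forall>(x::'b) n. x ^ n = 0 \<longrightarrow> x = 0)"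

text \<open>k-morphisms g : A^1_k \<rightarrow> X correspond to k-algebra homomorphisms
g^* : O(X) \<rightarrow> k[t]; f \<circ> g corresponds to g^* f.\<close>
definition A1_morphism :: "('a::field \<Rightarrow> 'b::comm_ring_1) \<Rightarrow> ('b \<Rightarrow> 'a poly) \<Rightarrow> bool" where
  "A1_morphism iota \<phi> \<longleftrightarrow> \<phi> 1 = 1 \<and> (\<forall>x y. \<phi> (x + y) = \<phi> x + \<phi> y)
     \<and> (\<forall>x y. \<phi> (x * y) = \<phi> x * \<phi> y) \<and> (\<forall>c. \<phi> (iota c) = [:c:])"

definition O_ch_g :: "('a::field \<Rightarrow> 'b::comm_ring_1) \<Rightarrow> ('b \<Rightarrow> 'a poly) \<Rightarrow> 'b set" where
  "O_ch_g iota \<phi> = {f. \<exists>c. \<phi> f = [:c:]}"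

definition O_ch :: "('a::field \<Rightarrow> 'b::comm_ring_1) \<Rightarrow> 'b set" where
  "O_ch iota = (\<Inter>\<phi>\<in>{\<phi>. A1_morphism iota \<phi>}. O_ch_g iota \<phi>)"

definition k_derivation :: "('a::field \<Rightarrow> 'b::comm_ring_1) \<Rightarrow> ('b \<Rightarrow> 'b) \<Rightarrow> bool" where
  "k_derivation iota D \<longleftrightarrow> (\<forall>x y. D (x + y) = D x + D y)
     \<and> (\<forall>c x. D (iota c * x) = iota c * D x)
     \<and> (\<forall>x y. D (x * y) = x * D y + y * D x)"

definition LND :: "('a::field \<Rightarrow> 'b::comm_ring_1) \<Rightarrow> ('b \<Rightarrow> 'b) set" where
  "LND iota = {D. k_derivation iota D \<and> (\<forall>x. \<exists>n. (D ^^ n) x = 0)}"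

definition makar_limanov :: "('a::field \<Rightarrow> 'b::comm_ring_1) \<Rightarrow> 'b set" where
  "makar_limanov iota = (\<Inter>D\<in>LND iota. {x. D x = 0})"

end

theory Submission
  imports Defs
begin


definition is_ideal :: "'b::comm_ring_1 set \<Rightarrow> bool" where
  "is_ideal P \<longleftrightarrow> 0 \<in> P \<and> (\<forall>a\<in>P. \<forall>b\<in>P. a + b \<in> P) \<and> (\<forall>a\<in>P. \<forall>r. r * a \<in> P)"

definition is_prime :: "'b::comm_ring_1 set \<Rightarrow> bool" where
  "is_prime P \<longleftrightarrow> is_ideal P \<and> 1 \<notin> P \<and> (\<forall>a b. a * b \<in> P \<longrightarrow> a \<in> P \<or> b \<in> P)"

lemma ideal_0: "is_ideal P \<Longrightarrow> 0 \<in> P" by (simp add: is_ideal_def)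
lemma ideal_add: "is_ideal P \<Longrightarrow> a \<in> P \<Longrightarrow> b \<in> P \<Longrightarrow> a + b \<in> P" by (simp add: is_ideal_def)
lemma ideal_multl: "is_ideal P \<Longrightarrow> a \<in> P \<Longrightarrow> r * a \<in> P" by (simp add: is_ideal_def)
lemma ideal_multr: "is_ideal P \<Longrightarrow> a \<in> P \<Longrightarrow> a * r \<in> P"
  by (metis ideal_multl mult.commute)
lemma ideal_neg: "is_ideal P \<Longrightarrow> a \<in> P \<Longrightarrow> - a \<in> P"
  using ideal_multl[of P a "-1"] by simp
lemma ideal_diff: "is_ideal P \<Longrightarrow> a \<in> P \<Longrightarrow> b \<in> P \<Longrightarrow> a - b \<in> P"
  using ideal_add[of P a "-b"] ideal_neg[of P b] by simp
lemma ideal_sum: "is_ideal P \<Longrightarrow> (\<And>i. i \<in> S \<Longrightarrow> g i \<in> P) \<Longrightarrow> sum g S \<in> P"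
  by (induction S rule: infinite_finite_induct) (auto intro: ideal_0 ideal_add)

lemma prime_pow: "is_prime P \<Longrightarrow> a \<notin> P \<Longrightarrow> a ^ n \<notin> P"
  by (induction n) (auto simp: is_prime_def)
lemma prime_mult: "is_prime P \<Longrightarrow> a \<notin> P \<Longrightarrow> b \<notin> P \<Longrightarrow> a * b \<notin> P"
  by (auto simp: is_prime_def)

definition cg :: "'b::comm_ring_1 set \<Rightarrow> 'b \<Rightarrow> 'b \<Rightarrow> bool" where
  "cg P a b \<longleftrightarrow> a - b \<in> P"

lemma cg_refl: "is_ideal P \<Longrightarrow> cg P a a" by (simp add: cg_def ideal_0)
lemma cg_sym: "is_ideal P \<Longrightarrow> cg P a b \<Longrightarrow> cg P b a"
  unfolding cg_def using ideal_neg[of P "a - b"] by simp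
lemma cg_trans: "is_ideal P \<Longrightarrow> cg P a b \<Longrightarrow> cg P b c \<Longrightarrow> cg P a c"
  unfolding cg_def using ideal_add[of P "a - b" "b - c"] by simp
lemma cg_add: "is_ideal P \<Longrightarrow> cg P a b \<Longrightarrow> cg P c d \<Longrightarrow> cg P (a + c) (b + d)"
  unfolding cg_def using ideal_add[of P "a - b" "c - d"] by (simp add: algebra_simps)
lemma cg_neg: "is_ideal P \<Longrightarrow> cg P a b \<Longrightarrow> cg P (- a) (- b)"
  unfolding cg_def using ideal_neg[of P "a - b"] by (simp add: algebra_simps)
lemma cg_mult: "is_ideal P \<Longrightarrow> cg P a b \<Longrightarrow> cg P c d \<Longrightarrow> cg P (a * c) (b * d)"
proof -
  assume I: "is_ideal P" and 1: "cg P a b" and 2: "cg P c d"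
  have "a * c - b * d = (a - b) * c + b * (c - d)" by (simp add: algebra_simps)
  moreover have "(a - b) * c \<in> P" using 1 I ideal_multr by (auto simp: cg_def)
  moreover have "b * (c - d) \<in> P" using 2 I ideal_multl by (auto simp: cg_def)
  ultimately show ?thesis using I ideal_add by (simp add: cg_def)
qed
lemma cg_mem: "is_ideal P \<Longrightarrow> cg P a b \<Longrightarrow> a \<in> P \<longleftrightarrow> b \<in> P"
proof -
  assume I: "is_ideal P" and c: "cg P a b"
  have "b = a - (a - b)" "a = b + (a - b)" by simp_all
  then show ?thesis using c I ideal_diff[of P a "a - b"] ideal_add[of P b "a - b"] unfolding cg_def by metis
qed
lemma cg_0: "is_ideal P \<Longrightarrow> cg P a 0 \<longleftrightarrow> a \<in> P"
  by (simp add: cg_def)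


locale kalg =
  fixes iota :: "'a::field_char_0 \<Rightarrow> 'b::comm_ring_1"
  assumes km: "k_algebra_map iota"
begin

lemma iota_add: "iota (a + b) = iota a + iota b" using km by (simp add: k_algebra_map_def)
lemma iota_mult: "iota (a * b) = iota a * iota b" using km by (simp add: k_algebra_map_def)
lemma iota_1: "iota 1 = 1" using km by (simp add: k_algebra_map_def)
lemma iota_0: "iota 0 = 0" using iota_add[of 0 0] by simp
lemma iota_neg: "iota (- a) = - iota a"
proof -
  have "iota a + iota (- a) = 0" using iota_add[of a "-a"] iota_0 by simp
  then show ?thesis by (rule minus_unique[symmetric])
qed
lemma iota_diff: "iota (a - b) = iota a - iota b"
  using iota_add[of a "-b"] iota_neg[of b] by simp
lemma iota_nz: "c \<noteq> 0 \<Longrightarrow> iota c \<noteq> 0"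
proof
  assume c: "c \<noteq> 0" "iota c = 0"
  have "(1::'b) = iota (c * inverse c)" using c iota_1 by simp
  also have "\<dots> = 0" using c iota_mult[of c "inverse c"] by simp
  finally show False by simp
qed
lemma iota_inj: "iota a = iota b \<Longrightarrow> a = b"
proof (rule ccontr)
  assume "iota a = iota b" "a \<noteq> b"
  then have "iota (a - b) = 0" "a - b \<noteq> 0" using iota_diff[of a b] by simp_all
  then show False using iota_nz by blast
qed
lemma iota_of_nat: "iota (of_nat n) = of_nat n"
  by (induction n) (auto simp: iota_add iota_1 iota_0)

definition subr :: "'b set \<Rightarrow> bool" where
  "subr A \<longleftrightarrow> (\<forall>c. iota c \<in> A) \<and> (\<forall>a\<in>A. \<forall>b\<in>A. a + b \<in> A \<and> a * b \<in> A)"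

lemma subr_sg: "subr (subalg_gen iota T)"
  by (auto simp: subr_def intro: subalg_gen.intros)

lemma subr_iota: "subr A \<Longrightarrow> iota c \<in> A" by (simp add: subr_def)
lemma subr_0: "subr A \<Longrightarrow> 0 \<in> A" using subr_iota[of A 0] iota_0 by simp
lemma subr_1: "subr A \<Longrightarrow> 1 \<in> A" using subr_iota[of A 1] iota_1 by simp
lemma subr_add: "subr A \<Longrightarrow> a \<in> A \<Longrightarrow> b \<in> A \<Longrightarrow> a + b \<in> A" by (simp add: subr_def)
lemma subr_mult: "subr A \<Longrightarrow> a \<in> A \<Longrightarrow> b \<in> A \<Longrightarrow> a * b \<in> A" by (simp add: subr_def)
lemma subr_neg: "subr A \<Longrightarrow> a \<in> A \<Longrightarrow> - a \<in> A"
  using subr_mult[of A "iota (-1)" a] subr_iota[of A "-1"] iota_neg iota_1 by simp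
lemma subr_diff: "subr A \<Longrightarrow> a \<in> A \<Longrightarrow> b \<in> A \<Longrightarrow> a - b \<in> A"
  using subr_add[of A a "-b"] subr_neg[of A b] by simp
lemma subr_sum: "subr A \<Longrightarrow> (\<And>i. i \<in> S \<Longrightarrow> g i \<in> A) \<Longrightarrow> sum g S \<in> A"
  by (induction S rule: infinite_finite_induct) (auto intro: subr_0 subr_add)
lemma subr_pow: "subr A \<Longrightarrow> a \<in> A \<Longrightarrow> a ^ n \<in> A"
  by (induction n) (auto intro: subr_1 subr_mult)

definition polys :: "'b set \<Rightarrow> 'b poly set" where
  "polys A = {p. \<forall>i. coeff p i \<in> A}"

lemma polys_coeff: "p \<in> polys A \<Longrightarrow> coeff p i \<in> A" by (simp add: polys_def)
lemma polys_add: "subr A \<Longrightarrow> p \<in> polys A \<Longrightarrow> q \<in> polys A \<Longrightarrow> p + q \<in> polys A"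
  by (simp add: polys_def subr_add)
lemma polys_neg: "subr A \<Longrightarrow> p \<in> polys A \<Longrightarrow> - p \<in> polys A"
  by (simp add: polys_def subr_neg)
lemma polys_diff: "subr A \<Longrightarrow> p \<in> polys A \<Longrightarrow> q \<in> polys A \<Longrightarrow> p - q \<in> polys A"
  by (simp add: polys_def subr_diff)
lemma polys_mult: "subr A \<Longrightarrow> p \<in> polys A \<Longrightarrow> q \<in> polys A \<Longrightarrow> p * q \<in> polys A"
  by (auto simp: polys_def coeff_mult intro!: subr_sum subr_mult)
lemma polys_const: "subr A \<Longrightarrow> a \<in> A \<Longrightarrow> [:a:] \<in> polys A"
  by (auto simp: polys_def coeff_pCons subr_0 split: nat.splits)
lemma polys_0: "subr A \<Longrightarrow> 0 \<in> polys A"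
  by (auto simp: polys_def subr_0)
lemma polys_1: "subr A \<Longrightarrow> 1 \<in> polys A"
  using polys_const[of A 1] subr_1 by (simp add: one_pCons)
lemma polys_X: "subr A \<Longrightarrow> [:0, 1:] \<in> polys A"
  by (auto simp: polys_def coeff_pCons subr_0 subr_1 split: nat.splits)
lemma polys_monom: "subr A \<Longrightarrow> a \<in> A \<Longrightarrow> monom a n \<in> polys A"
  by (auto simp: polys_def subr_0)
lemma polys_smult: "subr A \<Longrightarrow> a \<in> A \<Longrightarrow> p \<in> polys A \<Longrightarrow> smult a p \<in> polys A"
  by (auto simp: polys_def subr_mult)
lemma polys_pCons: "pCons a p \<in> polys A \<longleftrightarrow> a \<in> A \<and> p \<in> polys A"
  by (auto simp: polys_def coeff_pCons split: nat.splits)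

definition hom_on :: "'b set \<Rightarrow> ('b \<Rightarrow> 'a) \<Rightarrow> bool" where
  "hom_on A f \<longleftrightarrow> (\<forall>c. f (iota c) = c) \<and> (\<forall>a\<in>A. \<forall>b\<in>A. f (a + b) = f a + f b \<and> f (a * b) = f a * f b)"

lemma hom_iota: "hom_on A f \<Longrightarrow> f (iota c) = c" by (simp add: hom_on_def)
lemma hom_0: "hom_on A f \<Longrightarrow> f 0 = 0" using hom_iota[of A f 0] iota_0 by simp
lemma hom_1: "hom_on A f \<Longrightarrow> f 1 = 1" using hom_iota[of A f 1] iota_1 by simp
lemma hom_add: "hom_on A f \<Longrightarrow> a \<in> A \<Longrightarrow> b \<in> A \<Longrightarrow> f (a + b) = f a + f b" by (simp add: hom_on_def)
lemma hom_mult: "hom_on A f \<Longrightarrow> a \<in> A \<Longrightarrow> b \<in> A \<Longrightarrow> f (a * b) = f a * f b" by (simp add: hom_on_def)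
lemma hom_neg: "subr A \<Longrightarrow> hom_on A f \<Longrightarrow> a \<in> A \<Longrightarrow> f (- a) = - f a"
proof -
  assume a: "subr A" "hom_on A f" "a \<in> A"
  then have "f a + f (- a) = 0" using hom_add[of A f a "-a"] subr_neg[of A a] hom_0[of A f] by simp
  then show ?thesis by (rule minus_unique[symmetric])
qed
lemma hom_diff: "subr A \<Longrightarrow> hom_on A f \<Longrightarrow> a \<in> A \<Longrightarrow> b \<in> A \<Longrightarrow> f (a - b) = f a - f b"
  using hom_add[of A f a "-b"] subr_neg[of A b] hom_neg[of A f b] by simp
lemma hom_sum: "subr A \<Longrightarrow> hom_on A f \<Longrightarrow> (\<And>i. i \<in> S \<Longrightarrow> g i \<in> A) \<Longrightarrow> f (sum g S) = (\<Sum>i\<in>S. f (g i))"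
proof (induction S rule: infinite_finite_induct)
  case (infinite S) then show ?case using hom_0 by simp
next
  case empty then show ?case using hom_0 by simp
next
  case (insert x F)
  then show ?case using hom_add[of A f "g x" "sum g F"] subr_sum[of A F g] by simp
qed

lemma mp_coeff: "hom_on A f \<Longrightarrow> coeff (map_poly f p) i = f (coeff p i)"
  using coeff_map_poly hom_0 by metis
lemma mp_add: "hom_on A f \<Longrightarrow> p \<in> polys A \<Longrightarrow> q \<in> polys A \<Longrightarrow> map_poly f (p + q) = map_poly f p + map_poly f q"
  by (rule poly_eqI) (simp add: mp_coeff hom_add polys_coeff)
lemma mp_diff: "subr A \<Longrightarrow> hom_on A f \<Longrightarrow> p \<in> polys A \<Longrightarrow> q \<in> polys A \<Longrightarrow> map_poly f (p - q) = map_poly f p - map_poly f q"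
  by (rule poly_eqI) (simp add: mp_coeff hom_diff polys_coeff)
lemma mp_neg: "subr A \<Longrightarrow> hom_on A f \<Longrightarrow> p \<in> polys A \<Longrightarrow> map_poly f (- p) = - map_poly f p"
  by (rule poly_eqI) (simp add: mp_coeff hom_neg polys_coeff)
lemma mp_mult: "subr A \<Longrightarrow> hom_on A f \<Longrightarrow> p \<in> polys A \<Longrightarrow> q \<in> polys A \<Longrightarrow> map_poly f (p * q) = map_poly f p * map_poly f q"
proof (rule poly_eqI)
  fix n assume a: "subr A" "hom_on A f" "p \<in> polys A" "q \<in> polys A"
  have "f (\<Sum>i\<le>n. coeff p i * coeff q (n - i)) = (\<Sum>i\<le>n. f (coeff p i * coeff q (n - i)))"
    using a by (intro hom_sum[of A]) (auto intro: subr_mult polys_coeff)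
  also have "\<dots> = (\<Sum>i\<le>n. f (coeff p i) * f (coeff q (n - i)))"
    using a by (intro sum.cong) (auto intro: hom_mult polys_coeff)
  finally show "coeff (map_poly f (p * q)) n = coeff (map_poly f p * map_poly f q) n"
    using a by (simp add: mp_coeff coeff_mult)
qed
lemma mp_const: "hom_on A f \<Longrightarrow> map_poly f [:a:] = [:f a:]"
  by (rule poly_eqI) (simp add: mp_coeff coeff_pCons hom_0 split: nat.splits)

end


context kalg begin

lemma sg_mono: "T \<subseteq> T' \<Longrightarrow> subalg_gen iota T \<subseteq> subalg_gen iota T'"
proof
  fix y assume T: "T \<subseteq> T'" and y: "y \<in> subalg_gen iota T"
  from y show "y \<in> subalg_gen iota T'"
  proof (induction rule: subalg_gen.induct)
    case (gen x) then show ?case using T by (auto intro: subalg_gen.gen)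
  qed (auto intro: subalg_gen.scalar subalg_gen.add subalg_gen.mult)
qed

lemma sg_empty: "subalg_gen iota {} = range iota"
proof
  show "subalg_gen iota {} \<subseteq> range iota"
  proof
    fix y assume "y \<in> subalg_gen iota {}"
    then show "y \<in> range iota"
    proof (induction rule: subalg_gen.induct)
      case (add x y)
      then obtain a b where "x = iota a" "y = iota b" by auto
      then have "x + y = iota (a + b)" by (simp add: iota_add)
      then show ?case by simp
    next
      case (mult x y)
      then obtain a b where "x = iota a" "y = iota b" by auto
      then have "x * y = iota (a * b)" by (simp add: iota_mult)
      then show ?case by simp
    qed auto
  qed
  show "range iota \<subseteq> subalg_gen iota {}" by (auto intro: subalg_gen.scalar)
qed

lemma poly_in_sg:
  assumes "p \<in> polys (subalg_gen iota T)"
  shows "poly p x \<in> subalg_gen iota (insert x T)"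
  using assms
proof (induction p)
  case 0 then show ?case using subr_0[OF subr_sg] by simp
next
  case (pCons a p)
  then have "a \<in> subalg_gen iota (insert x T)" "poly p x \<in> subalg_gen iota (insert x T)"
    using sg_mono[of T "insert x T"] by (auto simp: polys_pCons)
  moreover have "x \<in> subalg_gen iota (insert x T)" by (auto intro: subalg_gen.gen)
  ultimately show ?case by (auto intro: subalg_gen.add subalg_gen.mult)
qed

lemma sg_insert: "subalg_gen iota (insert x T) = {poly p x | p. p \<in> polys (subalg_gen iota T)}"
proof
  let ?A = "subalg_gen iota T"
  have sA: "subr ?A" by (rule subr_sg)
  show "subalg_gen iota (insert x T) \<subseteq> {poly p x | p. p \<in> polys ?A}"
  proof
    fix y assume "y \<in> subalg_gen iota (insert x T)"
    then show "y \<in> {poly p x | p. p \<in> polys ?A}"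
    proof (induction rule: subalg_gen.induct)
      case (scalar c)
      have "[:iota c:] \<in> polys ?A" using sA by (intro polys_const subr_iota)
      then show ?case by force
    next
      case (gen y)
      show ?case
      proof (cases "y = x")
        case True
        then show ?thesis using polys_X[OF sA] by force
      next
        case False
        then have "y \<in> ?A" using gen by (auto intro: subalg_gen.gen)
        then have "[:y:] \<in> polys ?A" using sA by (intro polys_const)
        then show ?thesis by force
      qed
    next
      case (add a b)
      then obtain p q where "p \<in> polys ?A" "q \<in> polys ?A" "a = poly p x" "b = poly q x" by auto
      then show ?case using polys_add[OF sA, of p q] by (auto intro!: exI[of _ "p + q"])
    next
      case (mult a b)
      then obtain p q where "p \<in> polys ?A" "q \<in> polys ?A" "a = poly p x" "b = poly q x" by auto
      then show ?case using polys_mult[OF sA, of p q] by (auto intro!: exI[of _ "p * q"])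
    qed
  qed
  show "{poly p x | p. p \<in> polys ?A} \<subseteq> subalg_gen iota (insert x T)"
    using poly_in_sg by auto
qed

end

lemma poly_in_ideal:
  assumes "is_ideal P" "\<forall>i. coeff p i \<in> P"
  shows "poly p x \<in> P"
  using assms(2)
proof (induction p)
  case 0 then show ?case using ideal_0[OF assms(1)] by simp
next
  case (pCons a p)
  have "a \<in> P" using pCons.prems coeff_pCons_0[of a p] by metis
  moreover have "\<forall>i. coeff p i \<in> P"
  proof
    fix i show "coeff p i \<in> P" using pCons.prems coeff_pCons_Suc[of a p i] by metis
  qed
  ultimately have "a \<in> P" "poly p x \<in> P" using pCons.IH by auto
  then show ?case using assms(1) by (simp add: ideal_add ideal_multl)
qed

context kalg begin

lemma pdiv:
  assumes sA: "subr A" and q: "q \<in> polys A" and dq: "degree q \<ge> 1"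
  shows "p \<in> polys A \<Longrightarrow> \<exists>N w r. w \<in> polys A \<and> r \<in> polys A \<and>
     smult (lead_coeff q ^ N) p = q * w + r \<and> degree r < degree q \<and> degree w \<le> degree p - degree q"
proof (induction "degree p" arbitrary: p rule: less_induct)
  case less
  show ?case
  proof (cases "degree p < degree q")
    case True
    then show ?thesis using less.prems polys_0[OF sA]
      by (intro exI[of _ 0] exI[of _ 0] exI[of _ p]) simp
  next
    case False
    define a0 where "a0 = lead_coeff q"
    define c where "c = lead_coeff p"
    define e where "e = degree p - degree q"
    define p' where "p' = smult a0 p - monom c e * q"
    have a0A: "a0 \<in> A" "c \<in> A" using q less.prems by (auto simp: a0_def c_def polys_coeff)
    have p'A: "p' \<in> polys A" unfolding p'_def
      using a0A q less.prems sA by (intro polys_diff polys_smult polys_mult polys_monom) auto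
    have dp: "degree p \<ge> 1" using False dq by simp
    have "degree p' \<le> degree p - 1"
    proof (rule degree_le, intro allI impI)
      fix i assume i: "degree p - 1 < i"
      show "coeff p' i = 0"
      proof (cases "i = degree p")
        case True
        then have "\<not> i < e" "i - e = degree q" using False by (auto simp: e_def)
        then show ?thesis using True by (simp add: p'_def coeff_monom_mult a0_def c_def)
      next
        case F: False
        then have "i > degree p" using i dp by simp
        then have "coeff p i = 0" "coeff q (i - e) = 0" using False
          by (auto simp: e_def intro!: coeff_eq_0)
        then show ?thesis by (simp add: p'_def coeff_monom_mult)
      qed
    qed
    then have "degree p' < degree p" using dp by simp
    from less.hyps[OF this p'A] obtain N w r where
      wr: "w \<in> polys A" "r \<in> polys A" "smult (lead_coeff q ^ N) p' = q * w + r"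
          "degree r < degree q" "degree w \<le> degree p' - degree q" by blast
    define w2 where "w2 = w + monom (a0 ^ N * c) e"
    have "lead_coeff q ^ Suc N = a0 ^ N * a0" by (simp add: a0_def power_Suc2)
    then have "smult (lead_coeff q ^ Suc N) p = smult (a0 ^ N) (smult a0 p)" by simp
    also have "smult a0 p = p' + monom c e * q" by (simp add: p'_def)
    also have "smult (a0 ^ N) (p' + monom c e * q) = smult (a0 ^ N) p' + smult (a0 ^ N) (monom c e * q)"
      by (rule smult_add_right)
    also have "smult (a0 ^ N) p' = q * w + r" using wr(3) by (simp add: a0_def)
    also have "smult (a0 ^ N) (monom c e * q) = q * monom (a0 ^ N * c) e"
    proof -
      have "smult (a0 ^ N) (monom c e * q) = smult (a0 ^ N) (monom c e) * q"
        by (simp only: mult_smult_left)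
      also have "\<dots> = monom (a0 ^ N * c) e * q" by (simp only: smult_monom)
      finally show ?thesis by (simp only: mult.commute)
    qed
    also have "q * w + r + q * monom (a0 ^ N * c) e = q * w2 + r"
      unfolding w2_def distrib_left by (simp only: add_ac)
    finally have eq: "smult (lead_coeff q ^ Suc N) p = q * w2 + r" .
    have "degree w \<le> e" using wr(5) \<open>degree p' < degree p\<close> by (simp add: e_def)
    then have "degree w2 \<le> e" unfolding w2_def
      by (intro degree_add_le degree_monom_le)
    moreover have "w2 \<in> polys A" unfolding w2_def using wr(1) a0A sA
      by (intro polys_add polys_monom subr_mult subr_pow) auto
    ultimately show ?thesis using eq wr(2,4) unfolding e_def
      by (intro exI[of _ "Suc N"] exI[of _ w2] exI[of _ r]) simp
  qed
qed

lemma strip: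
  assumes I: "is_ideal P" and sA: "subr A"
  shows "p \<in> polys A \<Longrightarrow> \<exists>i. coeff p i \<notin> P \<Longrightarrow> \<exists>p'. p' \<in> polys A \<and> lead_coeff p' \<notin> P \<and> degree p' \<le> degree p \<and> (\<forall>i. coeff (p - p') i \<in> P)"
proof (induction "degree p" arbitrary: p rule: less_induct)
  case less
  show ?case
  proof (cases "lead_coeff p \<in> P")
    case False
    then show ?thesis using less.prems ideal_0[OF I] by (intro exI[of _ p]) auto
  next
    case True
    obtain i where i: "coeff p i \<notin> P" using less.prems by blast
    have dp: "degree p \<noteq> 0"
    proof
      assume "degree p = 0"
      show False
      proof (cases "i = 0")
        case True
        then show False using i \<open>lead_coeff p \<in> P\<close> \<open>degree p = 0\<close> by simp
      next
        case False
        then have "coeff p i = 0" using \<open>degree p = 0\<close> by (intro coeff_eq_0) simp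
        then show False using i ideal_0[OF I] by simp
      qed
    qed
    define p1 where "p1 = p - monom (lead_coeff p) (degree p)"
    have "degree p1 \<le> degree p - 1"
    proof (rule degree_le, intro allI impI)
      fix j assume j: "degree p - 1 < j"
      show "coeff p1 j = 0"
      proof (cases "j = degree p")
        case True then show ?thesis by (simp add: p1_def)
      next
        case False
        then have "degree p < j" using j dp by simp
        then have "coeff p j = 0" by (rule coeff_eq_0)
        then show ?thesis using False by (simp add: p1_def coeff_monom)
      qed
    qed
    then have dlt: "degree p1 < degree p" using dp by simp
    have p1A: "p1 \<in> polys A" unfolding p1_def using less.prems sA
      by (intro polys_diff polys_monom) (auto simp: polys_coeff)
    have "i \<noteq> degree p" using i True by auto
    then have "coeff p1 i \<notin> P" using i by (simp add: p1_def)
    then have "\<exists>i. coeff p1 i \<notin> P" by (rule exI)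
    from less.hyps[OF dlt p1A this] obtain p' where p': "p' \<in> polys A" "lead_coeff p' \<notin> P" "degree p' \<le> degree p1"
      "\<forall>i. coeff (p1 - p') i \<in> P" by (elim exE conjE)
    have "\<forall>j. coeff (p - p') j \<in> P"
    proof
      fix j
      have eqj: "coeff (p - p') j = coeff (monom (lead_coeff p) (degree p)) j + coeff (p1 - p') j"
        by (simp add: p1_def)
      have m1: "coeff (monom (lead_coeff p) (degree p)) j \<in> P"
      proof (cases "j = degree p")
        case True
        then have "coeff (monom (lead_coeff p) (degree p)) j = lead_coeff p" by simp
        then show ?thesis using \<open>lead_coeff p \<in> P\<close> by simp
      next
        case False
        then have "coeff (monom (lead_coeff p) (degree p)) j = 0" by (simp add: coeff_monom)
        then show ?thesis using ideal_0[OF I] by simp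
      qed
      have m2: "coeff (p1 - p') j \<in> P" using p'(4) by (rule spec)
      show "coeff (p - p') j \<in> P" unfolding eqj by (rule ideal_add[OF I m1 m2])
    qed
    moreover have "degree p' \<le> degree p" using p'(3) dlt by linarith
    ultimately show ?thesis using p'(1,2) by blast
  qed
qed

end


locale step_ctx = kalg iota for iota :: "'a::field_char_0 \<Rightarrow> 'b::comm_ring_1" +
  fixes P :: "'b set" and T :: "'b set" and x :: 'b
  assumes ac: "alg_closed TYPE('a)" and pr: "is_prime P"
begin

abbreviation "AA \<equiv> subalg_gen iota T"
abbreviation "BB \<equiv> subalg_gen iota (insert x T)"
definition "II = {p \<in> polys AA. poly p x \<in> P}"

lemma sA: "subr AA" by (rule subr_sg)
lemma Iid: "is_ideal P" using pr by (simp add: is_prime_def)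
lemma one_notin: "1 \<notin> P" using pr by (simp add: is_prime_def)

lemma BB_poly: "b \<in> BB \<Longrightarrow> \<exists>p. p \<in> polys AA \<and> b = poly p x"
  using sg_insert[of x T] by auto

lemma poly_BB: "p \<in> polys AA \<Longrightarrow> poly p x \<in> BB"
  using sg_insert[of x T] by auto

lemma mp_smult: "hom_on AA f \<Longrightarrow> a \<in> AA \<Longrightarrow> p \<in> polys AA \<Longrightarrow>
   map_poly f (smult a p) = smult (f a) (map_poly f p)"
proof (rule poly_eqI)
  fix n assume h: "hom_on AA f" "a \<in> AA" "p \<in> polys AA"
  have "f (a * coeff p n) = f a * f (coeff p n)" using h by (intro hom_mult) (auto intro: polys_coeff)
  then show "coeff (map_poly f (smult a p)) n = coeff (smult (f a) (map_poly f p)) n"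
    using h(1) by (simp add: mp_coeff)
qed

lemma mp_zero: "hom_on AA f \<Longrightarrow> (\<forall>a\<in>AA \<inter> P. f a = 0) \<Longrightarrow> p \<in> polys AA \<Longrightarrow> (\<forall>i. coeff p i \<in> P) \<Longrightarrow> map_poly f p = 0"
proof (rule poly_eqI)
  fix n assume h: "hom_on AA f" "\<forall>a\<in>AA \<inter> P. f a = 0" "p \<in> polys AA" "\<forall>i. coeff p i \<in> P"
  have "coeff p n \<in> AA \<inter> P" using h(3,4) polys_coeff by blast
  then have "f (coeff p n) = 0" using h(2) by blast
  then show "coeff (map_poly f p) n = coeff 0 n" using h(1) by (simp add: mp_coeff)
qed

lemma poly_diff_in:
  assumes "p \<in> polys AA" "p' \<in> polys AA" "\<forall>i. coeff (p - p') i \<in> P"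
  shows "cg P (poly p x) (poly p' x)"
proof -
  have "poly (p - p') x \<in> P" using poly_in_ideal[OF Iid assms(3)] .
  then show ?thesis by (simp add: cg_def)
qed

lemma ext_hom:
  assumes hf: "hom_on AA f"
    and WD: "\<And>p. p \<in> polys AA \<Longrightarrow> poly p x \<in> P \<Longrightarrow> poly (map_poly f p) \<xi> = 0"
  shows "\<exists>g. hom_on BB g \<and> (\<forall>b\<in>BB \<inter> P. g b = 0) \<and> (\<forall>p\<in>polys AA. g (poly p x) = poly (map_poly f p) \<xi>)"
proof -
  define g where "g b = poly (map_poly f (SOME p. p \<in> polys AA \<and> poly p x = b)) \<xi>" for b
  have key: "g (poly p x) = poly (map_poly f p) \<xi>" if p: "p \<in> polys AA" for p
  proof -
    define p0 where "p0 = (SOME p'. p' \<in> polys AA \<and> poly p' x = poly p x)"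
    have "p0 \<in> polys AA \<and> poly p0 x = poly p x"
      unfolding p0_def by (rule someI[of _ p]) (simp add: p)
    then have p0: "p0 \<in> polys AA" "poly p0 x = poly p x" by auto
    have "p0 - p \<in> polys AA" using p0(1) p sA by (intro polys_diff)
    moreover have "poly (p0 - p) x \<in> P" using p0(2) ideal_0[OF Iid] by simp
    ultimately have "poly (map_poly f (p0 - p)) \<xi> = 0" by (rule WD)
    then have "poly (map_poly f p0) \<xi> = poly (map_poly f p) \<xi>"
      using mp_diff[OF sA hf p0(1) p] by simp
    then show ?thesis by (simp add: g_def p0_def)
  qed
  have "hom_on BB g" unfolding hom_on_def
  proof (intro conjI allI ballI)
    fix c
    have "[:iota c:] \<in> polys AA" using sA by (intro polys_const subr_iota)
    then have "g (poly [:iota c:] x) = poly (map_poly f [:iota c:]) \<xi>" by (rule key)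
    then show "g (iota c) = c" using mp_const[OF hf] hom_iota[OF hf] by simp
  next
    fix a b assume "a \<in> BB" "b \<in> BB"
    then obtain p q where pq: "p \<in> polys AA" "q \<in> polys AA" "a = poly p x" "b = poly q x"
      using BB_poly by blast
    have s1: "p + q \<in> polys AA" "p * q \<in> polys AA" using pq sA by (auto intro: polys_add polys_mult)
    have "g (poly (p + q) x) = poly (map_poly f (p + q)) \<xi>"
          "g (poly (p * q) x) = poly (map_poly f (p * q)) \<xi>" using key[OF s1(1)] key[OF s1(2)] by auto
    then show "g (a + b) = g a + g b" "g (a * b) = g a * g b"
      using pq key[OF pq(1)] key[OF pq(2)] mp_add[OF hf pq(1,2)] mp_mult[OF sA hf pq(1,2)] by auto
  qed
  moreover have "\<forall>b\<in>BB \<inter> P. g b = 0"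
  proof
    fix b assume "b \<in> BB \<inter> P"
    then obtain p where p: "p \<in> polys AA" "b = poly p x" "poly p x \<in> P" using BB_poly by blast
    then show "g b = 0" using key[OF p(1)] WD[OF p(1) p(3)] by simp
  qed
  ultimately show ?thesis using key by blast
qed

end


context kalg begin
lemma hom_pow: "subr A \<Longrightarrow> hom_on A f \<Longrightarrow> a \<in> A \<Longrightarrow> f (a ^ n) = f a ^ n"
proof (induction n)
  case 0 then show ?case using hom_1 by simp
next
  case (Suc n)
  then have "f (a * a ^ n) = f a * f (a ^ n)" by (intro hom_mult subr_pow)
  then show ?case using Suc by simp
qed
end

context step_ctx begin

lemma not_all_P: "r \<in> polys AA \<Longrightarrow> poly r x \<notin> P \<Longrightarrow> \<exists>i. coeff r i \<notin> P"
proof (rule ccontr)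
  assume a: "poly r x \<notin> P" "\<not> (\<exists>i. coeff r i \<notin> P)"
  then have "\<forall>i. coeff r i \<in> P" by blast
  then have "poly r x \<in> P" by (rule poly_in_ideal[OF Iid])
  then show False using a by simp
qed

lemma trans_case:
  assumes tr: "\<And>p i. p \<in> II \<Longrightarrow> coeff p i \<in> P" and v: "v \<in> BB" "v \<notin> P"
  shows "\<exists>u\<in>AA. u \<notin> P \<and> (\<forall>f. hom_on AA f \<and> (\<forall>a\<in>AA \<inter> P. f a = 0) \<and> f u \<noteq> 0 \<longrightarrow>
           (\<exists>g. hom_on BB g \<and> (\<forall>b\<in>BB \<inter> P. g b = 0) \<and> g v \<noteq> 0))"
proof -
  obtain r where r: "r \<in> polys AA" "v = poly r x" using BB_poly v(1) by blast
  have "\<exists>i. coeff r i \<notin> P" using not_all_P r v by simp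
  from strip[OF Iid sA r(1) this] obtain r0 where
    r0: "r0 \<in> polys AA" "lead_coeff r0 \<notin> P" "degree r0 \<le> degree r" "\<forall>i. coeff (r - r0) i \<in> P"
    by (elim exE conjE)
  have u: "lead_coeff r0 \<in> AA" using r0(1) by (rule polys_coeff)
  show ?thesis
  proof (intro bexI[of _ "lead_coeff r0"] conjI allI impI)
    fix f assume "hom_on AA f \<and> (\<forall>a\<in>AA \<inter> P. f a = 0) \<and> f (lead_coeff r0) \<noteq> 0"
    then have hf: "hom_on AA f" and van: "\<forall>a\<in>AA \<inter> P. f a = 0" and fu: "f (lead_coeff r0) \<noteq> 0"
      by auto
    have "coeff (map_poly f r0) (degree r0) \<noteq> 0" using fu mp_coeff[OF hf] by simp
    then have nz: "map_poly f r0 \<noteq> 0" by auto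
    have "finite {z. poly (map_poly f r0) z = 0}" using poly_roots_finite[OF nz] .
    then obtain \<xi> where xi: "\<xi> \<notin> {z. poly (map_poly f r0) z = 0}"
      using ex_new_if_finite[OF infinite_UNIV_char_0] by blast
    have WD: "poly (map_poly f p) \<xi> = 0" if p: "p \<in> polys AA" "poly p x \<in> P" for p
    proof -
      have "p \<in> II" using p by (simp add: II_def)
      then have "\<forall>i. coeff p i \<in> P" using tr by blast
      then have "map_poly f p = 0" using mp_zero[OF hf van p(1)] by blast
      then show ?thesis by simp
    qed
    from ext_hom[OF hf WD] obtain g where g: "hom_on BB g" "\<forall>b\<in>BB \<inter> P. g b = 0"
      "\<forall>p\<in>polys AA. g (poly p x) = poly (map_poly f p) \<xi>" by blast
    have rr: "r - r0 \<in> polys AA" using r(1) r0(1) sA by (intro polys_diff)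
    have "map_poly f (r - r0) = 0" using mp_zero[OF hf van rr r0(4)] .
    then have "map_poly f r = map_poly f r0" using mp_diff[OF sA hf r(1) r0(1)] by simp
    then have "g v \<noteq> 0" using g(3) r xi by simp
    then show "\<exists>g. hom_on BB g \<and> (\<forall>b\<in>BB \<inter> P. g b = 0) \<and> g v \<noteq> 0" using g by blast
  qed (use u r0 in auto)
qed

lemma inverse:
  assumes q: "q \<in> II" "lead_coeff q \<notin> P" "degree q \<ge> 1"
    and Min: "\<And>p. p \<in> II \<Longrightarrow> degree p < degree q \<Longrightarrow> \<forall>i. coeff p i \<in> P"
  shows "r \<in> polys AA \<Longrightarrow> poly r x \<notin> P \<Longrightarrow> \<exists>t d. t \<in> polys AA \<and> d \<in> AA \<and> d \<notin> P \<and> cg P (poly t x * poly r x) d"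
proof (induction "degree r" arbitrary: r rule: less_induct)
  case less
  have I: "is_ideal P" by (rule Iid)
  have qA: "q \<in> polys AA" "poly q x \<in> P" using q(1) by (auto simp: II_def)
  have "\<exists>i. coeff r i \<notin> P" using not_all_P less.prems by simp
  from strip[OF Iid sA less.prems(1) this] obtain r0 where
    r0: "r0 \<in> polys AA" "lead_coeff r0 \<notin> P" "degree r0 \<le> degree r" "\<forall>i. coeff (r - r0) i \<in> P"
    by (elim exE conjE)
  have cr: "cg P (poly r x) (poly r0 x)" using poly_diff_in[OF less.prems(1) r0(1) r0(4)] .
  have r0P: "poly r0 x \<notin> P" using cg_mem[OF I cr] less.prems(2) by simp
  have a0A: "lead_coeff q \<in> AA" using qA(1) by (rule polys_coeff)
  consider (big) "degree r0 \<ge> degree q" | (zero) "degree r0 = 0" | (mid) "0 < degree r0" "degree r0 < degree q"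
    by linarith
  then show ?case
  proof cases
    case big
    from pdiv[OF sA qA(1) q(3) r0(1)] obtain N w r1 where
      d: "w \<in> polys AA" "r1 \<in> polys AA" "smult (lead_coeff q ^ N) r0 = q * w + r1"
         "degree r1 < degree q" "degree w \<le> degree r0 - degree q"
      by (elim exE conjE)
    have "poly (smult (lead_coeff q ^ N) r0) x = poly (q * w + r1) x" using d(3) by simp
    then have ev: "lead_coeff q ^ N * poly r0 x = poly q x * poly w x + poly r1 x" by simp
    have c1: "cg P (lead_coeff q ^ N * poly r0 x) (poly r1 x)"
      unfolding cg_def ev using ideal_multr[OF I qA(2)] by simp
    have "lead_coeff q ^ N * poly r0 x \<notin> P" using prime_mult[OF pr prime_pow[OF pr q(2)] r0P] .
    then have r1P: "poly r1 x \<notin> P" using cg_mem[OF I c1] by simp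
    have "degree r1 < degree r" using d(4) big r0(3) by linarith
    from less.hyps[OF this d(2) r1P] obtain t1 dd where
      t1: "t1 \<in> polys AA" "dd \<in> AA" "dd \<notin> P" "cg P (poly t1 x * poly r1 x) dd" by (elim exE conjE)
    define t where "t = t1 * [:lead_coeff q ^ N:]"
    have tA: "t \<in> polys AA" unfolding t_def using t1(1) a0A sA
      by (intro polys_mult polys_const subr_pow)
    have e1: "cg P (poly t1 x * (lead_coeff q ^ N * poly r x)) (poly t1 x * (lead_coeff q ^ N * poly r0 x))"
      by (intro cg_mult[OF I] cg_refl[OF I] cr)
    have e2: "cg P (poly t1 x * (lead_coeff q ^ N * poly r0 x)) (poly t1 x * poly r1 x)"
      by (intro cg_mult[OF I] cg_refl[OF I] c1)
    have e3: "poly t x * poly r x = poly t1 x * (lead_coeff q ^ N * poly r x)"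
      by (simp add: t_def mult.assoc)
    have "cg P (poly t x * poly r x) dd"
      unfolding e3 by (rule cg_trans[OF I e1 cg_trans[OF I e2 t1(4)]])
    then show ?thesis using tA t1(2,3) by blast
  next
    case zero
    have "[:coeff r0 0:] = r0" using degree_0_id[OF zero] .
    then have "poly r0 x = coeff r0 0" by (metis poly_pCons mult_zero_right poly_0 add_0_right)
    then have r0c: "poly r0 x = lead_coeff r0" using zero by simp
    have cA: "lead_coeff r0 \<in> AA" using r0(1) by (rule polys_coeff)
    have "cg P (poly 1 x * poly r x) (lead_coeff r0)" using cr r0c by simp
    then show ?thesis using polys_1[OF sA] cA r0(2) by blast
  next
    case mid
    define c where "c = lead_coeff r0"
    have cA: "c \<in> AA" unfolding c_def using r0(1) by (rule polys_coeff)
    have cP: "c \<notin> P" using r0(2) by (simp add: c_def)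
    have dr0: "degree r0 \<ge> 1" using mid by simp
    from pdiv[OF sA r0(1) dr0 qA(1)] obtain M w r2 where
      d: "w \<in> polys AA" "r2 \<in> polys AA" "smult (lead_coeff r0 ^ M) q = r0 * w + r2"
         "degree r2 < degree r0" "degree w \<le> degree q - degree r0"
      by (elim exE conjE)
    have "poly (smult (lead_coeff r0 ^ M) q) x = poly (r0 * w + r2) x" using d(3) by simp
    then have ev: "c ^ M * poly q x = poly r0 x * poly w x + poly r2 x" by (simp add: c_def)
    have r2P: "poly r2 x \<notin> P"
    proof
      assume r2in: "poly r2 x \<in> P"
      have "poly r0 x * poly w x = c ^ M * poly q x - poly r2 x" using ev by simp
      moreover have "c ^ M * poly q x - poly r2 x \<in> P"
        by (rule ideal_diff[OF I ideal_multl[OF I qA(2)] r2in])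
      ultimately have "poly r0 x * poly w x \<in> P" by simp
      then have wP: "poly w x \<in> P" using pr r0P by (auto simp: is_prime_def)
      have wII: "w \<in> II" using d(1) wP by (simp add: II_def)
      have "degree w < degree q" using d(5) mid by linarith
      then have wc: "\<forall>i. coeff w i \<in> P" using Min[OF wII] by blast
      have "coeff (smult (lead_coeff r0 ^ M) q) (degree q) = coeff (r0 * w) (degree q) + coeff r2 (degree q)"
        using d(3) by simp
      moreover have "coeff r2 (degree q) = 0" using d(4) mid by (intro coeff_eq_0) linarith
      moreover have "coeff (r0 * w) (degree q) \<in> P"
        unfolding coeff_mult
      proof (rule ideal_sum[OF I])
        fix i show "coeff r0 i * coeff w (degree q - i) \<in> P"
          using wc by (intro ideal_multl[OF I]) blast
      qed
      ultimately have "c ^ M * lead_coeff q \<in> P" by (simp add: c_def)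
      moreover have "c ^ M * lead_coeff q \<notin> P" by (rule prime_mult[OF pr prime_pow[OF pr cP] q(2)])
      ultimately show False by simp
    qed
    have "degree r2 < degree r" using d(4) r0(3) by linarith
    from less.hyps[OF this d(2) r2P] obtain t2 dd where
      t2: "t2 \<in> polys AA" "dd \<in> AA" "dd \<notin> P" "cg P (poly t2 x * poly r2 x) dd" by (elim exE conjE)
    define t where "t = - (t2 * w)"
    have tA: "t \<in> polys AA" unfolding t_def using t2(1) d(1) sA
      by (intro polys_neg polys_mult)
    have "poly r2 x + poly r x * poly w x = c ^ M * poly q x + (poly r x - poly r0 x) * poly w x"
      using ev by (simp add: algebra_simps)
    moreover have "c ^ M * poly q x + (poly r x - poly r0 x) * poly w x \<in> P"
      using cr unfolding cg_def by (intro ideal_add[OF I] ideal_multl[OF I qA(2)] ideal_multr[OF I])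
    ultimately have "cg P (poly r2 x) (- (poly r x * poly w x))" by (simp add: cg_def)
    then have e1: "cg P (poly t2 x * poly r2 x) (poly t2 x * (- (poly r x * poly w x)))"
      by (intro cg_mult[OF I] cg_refl[OF I])
    have e2: "poly t x * poly r x = poly t2 x * (- (poly r x * poly w x))"
      by (simp add: t_def algebra_simps)
    have "cg P (poly t x * poly r x) dd"
      unfolding e2 by (rule cg_trans[OF I cg_sym[OF I e1] t2(4)])
    then show ?thesis using tA t2(2,3) by blast
  qed
qed

end


context step_ctx begin

lemma alg_case:
  assumes ex: "\<exists>p\<in>II. \<exists>i. coeff p i \<notin> P" and v: "v \<in> BB" "v \<notin> P"
  shows "\<exists>u\<in>AA. u \<notin> P \<and> (\<forall>f. hom_on AA f \<and> (\<forall>a\<in>AA \<inter> P. f a = 0) \<and> f u \<noteq> 0 \<longrightarrow>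
           (\<exists>g. hom_on BB g \<and> (\<forall>b\<in>BB \<inter> P. g b = 0) \<and> g v \<noteq> 0))"
proof -
  have I: "is_ideal P" by (rule Iid)
  obtain p i where p: "p \<in> II" "coeff p i \<notin> P" using ex by blast
  have pA: "p \<in> polys AA" "poly p x \<in> P" using p(1) by (auto simp: II_def)
  have "\<exists>i. coeff p i \<notin> P" using p(2) by blast
  from strip[OF I sA pA(1) this] obtain q1 where
    q1: "q1 \<in> polys AA" "lead_coeff q1 \<notin> P" "degree q1 \<le> degree p" "\<forall>i. coeff (p - q1) i \<in> P"
    by (elim exE conjE)
  have "poly q1 x \<in> P" using cg_mem[OF I poly_diff_in[OF pA(1) q1(1) q1(4)]] pA(2) by simp
  define QQ where "QQ = {q \<in> II. lead_coeff q \<notin> P}"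
  have q1Q: "q1 \<in> QQ" using q1 \<open>poly q1 x \<in> P\<close> by (simp add: QQ_def II_def)
  define m where "m = (LEAST d. \<exists>q\<in>QQ. degree q = d)"
  have "\<exists>q\<in>QQ. degree q = m" unfolding m_def by (rule LeastI[of _ "degree q1"]) (use q1Q in blast)
  then obtain q where qQ: "q \<in> QQ" and qm: "degree q = m" by blast
  have minQ: "m \<le> degree q'" if "q' \<in> QQ" for q'
    unfolding m_def by (rule Least_le) (use that in blast)
  have qII: "q \<in> II" and qlc: "lead_coeff q \<notin> P" using qQ by (auto simp: QQ_def)
  have qA: "q \<in> polys AA" "poly q x \<in> P" using qII by (auto simp: II_def)
  have Min: "\<forall>i. coeff p i \<in> P" if pp: "p \<in> II" "degree p < degree q" for p
  proof (rule ccontr)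
    assume "\<not> (\<forall>i. coeff p i \<in> P)"
    then have "\<exists>i. coeff p i \<notin> P" by blast
    have ppA: "p \<in> polys AA" "poly p x \<in> P" using pp(1) by (auto simp: II_def)
    from strip[OF I sA ppA(1) \<open>\<exists>i. coeff p i \<notin> P\<close>] obtain p' where
      p': "p' \<in> polys AA" "lead_coeff p' \<notin> P" "degree p' \<le> degree p" "\<forall>i. coeff (p - p') i \<in> P"
      by (elim exE conjE)
    have "poly p' x \<in> P" using cg_mem[OF I poly_diff_in[OF ppA(1) p'(1) p'(4)]] ppA(2) by simp
    then have "p' \<in> QQ" using p' by (simp add: QQ_def II_def)
    then have "m \<le> degree p'" by (rule minQ)
    then show False using p'(3) pp(2) qm by linarith
  qed
  have dq: "degree q \<ge> 1"
  proof (rule ccontr)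
    assume "\<not> degree q \<ge> 1"
    then have z: "degree q = 0" by simp
    have "[:coeff q 0:] = q" using degree_0_id[OF z] .
    then have "poly q x = coeff q 0" by (metis poly_pCons mult_zero_right poly_0 add_0_right)
    then have "poly q x = lead_coeff q" using z by simp
    then show False using qA(2) qlc by simp
  qed
  obtain r where r: "r \<in> polys AA" "v = poly r x" using BB_poly v(1) by blast
  have rP: "poly r x \<notin> P" using r v by simp
  have "\<exists>t d. t \<in> polys AA \<and> d \<in> AA \<and> d \<notin> P \<and> cg P (poly t x * poly r x) d"
    by (rule inverse[OF qII qlc dq _ r(1) rP]) (use Min in blast)
  then obtain t d where
    td: "t \<in> polys AA" "d \<in> AA" "d \<notin> P" "cg P (poly t x * poly r x) d"
    by (elim exE conjE)
  have a0A: "lead_coeff q \<in> AA" using qA(1) by (rule polys_coeff)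
  have uA: "lead_coeff q * d \<in> AA" using a0A td(2) sA by (intro subr_mult)
  have uP: "lead_coeff q * d \<notin> P" by (rule prime_mult[OF pr qlc td(3)])
  show ?thesis
  proof (intro bexI[of _ "lead_coeff q * d"] conjI allI impI)
    fix f assume "hom_on AA f \<and> (\<forall>a\<in>AA \<inter> P. f a = 0) \<and> f (lead_coeff q * d) \<noteq> 0"
    then have hf: "hom_on AA f" and van: "\<forall>a\<in>AA \<inter> P. f a = 0" and fu: "f (lead_coeff q * d) \<noteq> 0"
      by auto
    have "f (lead_coeff q * d) = f (lead_coeff q) * f d" by (rule hom_mult[OF hf a0A td(2)])
    then have fa0: "f (lead_coeff q) \<noteq> 0" and fd: "f d \<noteq> 0" using fu by auto
    have "coeff (map_poly f q) (degree q) \<noteq> 0" using fa0 mp_coeff[OF hf] by simp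
    then have "degree q \<le> degree (map_poly f q)" by (rule le_degree)
    then have "degree (map_poly f q) \<ge> 1" using dq by simp
    then obtain \<xi> where xi: "poly (map_poly f q) \<xi> = 0" using ac unfolding alg_closed_def by blast
    have WD: "poly (map_poly f p) \<xi> = 0" if pp: "p \<in> polys AA" "poly p x \<in> P" for p
    proof -
      from pdiv[OF sA qA(1) dq pp(1)] obtain N w rm where
        d: "w \<in> polys AA" "rm \<in> polys AA" "smult (lead_coeff q ^ N) p = q * w + rm"
           "degree rm < degree q" "degree w \<le> degree p - degree q"
        by (elim exE conjE)
      have "poly (smult (lead_coeff q ^ N) p) x = poly (q * w + rm) x" using d(3) by simp
      then have "poly rm x = lead_coeff q ^ N * poly p x - poly q x * poly w x" by simp
      also have "\<dots> \<in> P" by (rule ideal_diff[OF I ideal_multl[OF I pp(2)] ideal_multr[OF I qA(2)]])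
      finally have "rm \<in> II" using d(2) by (simp add: II_def)
      then have "\<forall>i. coeff rm i \<in> P" using Min d(4) by blast
      then have mrm: "map_poly f rm = 0" by (rule mp_zero[OF hf van d(2)])
      have aN: "lead_coeff q ^ N \<in> AA" using a0A sA by (intro subr_pow)
      have qw: "q * w \<in> polys AA" using qA(1) d(1) sA by (intro polys_mult)
      have "smult (f (lead_coeff q ^ N)) (map_poly f p) = map_poly f (smult (lead_coeff q ^ N) p)"
        by (rule mp_smult[OF hf aN pp(1), symmetric])
      also have "\<dots> = map_poly f (q * w + rm)" using d(3) by simp
      also have "\<dots> = map_poly f q * map_poly f w"
        using mp_add[OF hf qw d(2)] mp_mult[OF sA hf qA(1) d(1)] mrm by simp
      finally have "poly (smult (f (lead_coeff q ^ N)) (map_poly f p)) \<xi> = poly (map_poly f q * map_poly f w) \<xi>"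
        by simp
      then have "f (lead_coeff q ^ N) * poly (map_poly f p) \<xi> = 0" using xi by simp
      moreover have "f (lead_coeff q ^ N) \<noteq> 0" using hom_pow[OF sA hf a0A] fa0 by simp
      ultimately show ?thesis by simp
    qed
    from ext_hom[OF hf WD] obtain g where g: "hom_on BB g" "\<forall>b\<in>BB \<inter> P. g b = 0"
      "\<forall>p\<in>polys AA. g (poly p x) = poly (map_poly f p) \<xi>" by blast
    have dA: "[:d:] \<in> polys AA" using td(2) sA by (intro polys_const)
    have tr: "t * r \<in> polys AA" using td(1) r(1) sA by (intro polys_mult)
    have trd: "t * r - [:d:] \<in> polys AA" using tr dA sA by (intro polys_diff)
    have "poly (t * r - [:d:]) x \<in> P" using td(4) by (simp add: cg_def)
    then have "poly (map_poly f (t * r - [:d:])) \<xi> = 0" by (rule WD[OF trd])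
    then have "poly (map_poly f t) \<xi> * poly (map_poly f r) \<xi> - f d = 0"
      using mp_diff[OF sA hf tr dA] mp_mult[OF sA hf td(1) r(1)] mp_const[OF hf] by simp
    then have "poly (map_poly f r) \<xi> \<noteq> 0" using fd by auto
    then have "g v \<noteq> 0" using g(3) r by simp
    then show "\<exists>g. hom_on BB g \<and> (\<forall>b\<in>BB \<inter> P. g b = 0) \<and> g v \<noteq> 0" using g by blast
  qed (use uA uP in auto)
qed

lemma step:
  assumes v: "v \<in> BB" "v \<notin> P"
  shows "\<exists>u\<in>AA. u \<notin> P \<and> (\<forall>f. hom_on AA f \<and> (\<forall>a\<in>AA \<inter> P. f a = 0) \<and> f u \<noteq> 0 \<longrightarrow>
           (\<exists>g. hom_on BB g \<and> (\<forall>b\<in>BB \<inter> P. g b = 0) \<and> g v \<noteq> 0))"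
proof (cases "\<exists>p\<in>II. \<exists>i. coeff p i \<notin> P")
  case True then show ?thesis using alg_case v by blast
next
  case False
  then have "\<And>p i. p \<in> II \<Longrightarrow> coeff p i \<in> P" by blast
  then show ?thesis using trans_case v by blast
qed

end


context kalg begin

lemma main_ind:
  assumes ac: "alg_closed TYPE('a)" and pr: "is_prime P" and fin: "finite T"
  shows "\<forall>v\<in>subalg_gen iota T. v \<notin> P \<longrightarrow>
     (\<exists>f. hom_on (subalg_gen iota T) f \<and> (\<forall>a\<in>subalg_gen iota T \<inter> P. f a = 0) \<and> f v \<noteq> 0)"
  using fin
proof (induction T rule: finite_induct)
  case empty
  have I: "is_ideal P" and one: "1 \<notin> P" using pr by (auto simp: is_prime_def)
  have iP: "iota c \<in> P \<Longrightarrow> c = 0" for c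
  proof (rule ccontr)
    assume "iota c \<in> P" "c \<noteq> 0"
    then have "iota (inverse c) * iota c \<in> P" by (intro ideal_multl[OF I])
    then have "iota (inverse c * c) \<in> P" by (simp add: iota_mult)
    then show False using \<open>c \<noteq> 0\<close> one iota_1 by simp
  qed
  define f where "f y = (THE c. y = iota c)" for y
  have fi: "f (iota c) = c" for c
    unfolding f_def by (rule the_equality) (auto dest: iota_inj)
  have hf: "hom_on (subalg_gen iota {}) f" unfolding hom_on_def sg_empty
  proof (intro conjI allI ballI)
    fix c show "f (iota c) = c" by (rule fi)
  next
    fix a b assume "a \<in> range iota" "b \<in> range iota"
    then obtain a' b' where ab: "a = iota a'" "b = iota b'" by auto
    show "f (a + b) = f a + f b" using ab fi iota_add by metis
    show "f (a * b) = f a * f b" using ab fi iota_mult by metis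
  qed
  show ?case
  proof (intro ballI impI)
    fix v assume v: "v \<in> subalg_gen iota {}" "v \<notin> P"
    then obtain c where c: "v = iota c" using sg_empty by auto
    have "c \<noteq> 0" using v c iota_0 ideal_0[OF I] by auto
    moreover have "\<forall>a\<in>subalg_gen iota {} \<inter> P. f a = 0"
    proof
      fix a assume "a \<in> subalg_gen iota {} \<inter> P"
      then obtain c' where "a = iota c'" "iota c' \<in> P" using sg_empty by auto
      then show "f a = 0" using iP fi by simp
    qed
    ultimately show "\<exists>f. hom_on (subalg_gen iota {}) f \<and> (\<forall>a\<in>subalg_gen iota {} \<inter> P. f a = 0) \<and> f v \<noteq> 0"
      using hf c fi by auto
  qed
next
  case (insert x F)
  interpret S: step_ctx iota P F x
    using ac pr km by (simp add: step_ctx_def step_ctx_axioms_def kalg_def)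
  show ?case
  proof (intro ballI impI)
    fix v assume v: "v \<in> subalg_gen iota (insert x F)" "v \<notin> P"
    from S.step[OF v] obtain u where u: "u \<in> subalg_gen iota F" "u \<notin> P"
      and ext: "\<forall>f. hom_on (subalg_gen iota F) f \<and> (\<forall>a\<in>subalg_gen iota F \<inter> P. f a = 0) \<and> f u \<noteq> 0 \<longrightarrow>
           (\<exists>g. hom_on (subalg_gen iota (insert x F)) g \<and> (\<forall>b\<in>subalg_gen iota (insert x F) \<inter> P. g b = 0) \<and> g v \<noteq> 0)"
      by blast
    from insert.IH u obtain f where "hom_on (subalg_gen iota F) f" "\<forall>a\<in>subalg_gen iota F \<inter> P. f a = 0" "f u \<noteq> 0"
      by blast
    then show "\<exists>g. hom_on (subalg_gen iota (insert x F)) g \<and> (\<forall>b\<in>subalg_gen iota (insert x F) \<inter> P. g b = 0) \<and> g v \<noteq> 0"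
      using ext by blast
  qed
qed

end

lemma ideal_ext:
  assumes I: "is_ideal M"
  shows "is_ideal {m + r * a | m r. m \<in> M}"
  unfolding is_ideal_def
proof (intro conjI ballI allI)
  show "0 \<in> {m + r * a | m r. m \<in> M}" using ideal_0[OF I] by (intro CollectI exI[of _ 0]) simp
next
  fix y z assume "y \<in> {m + r * a | m r. m \<in> M}" "z \<in> {m + r * a | m r. m \<in> M}"
  then obtain m1 r1 m2 r2 where "y = m1 + r1 * a" "m1 \<in> M" "z = m2 + r2 * a" "m2 \<in> M" by blast
  then have "y + z = (m1 + m2) + (r1 + r2) * a" "m1 + m2 \<in> M"
    using ideal_add[OF I] by (auto simp: algebra_simps)
  then show "y + z \<in> {m + r * a | m r. m \<in> M}" by blast
next
  fix y s assume "y \<in> {m + r * a | m r. m \<in> M}"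
  then obtain m1 r1 where "y = m1 + r1 * a" "m1 \<in> M" by blast
  then have "s * y = s * m1 + (s * r1) * a" "s * m1 \<in> M"
    using ideal_multl[OF I] by (auto simp: algebra_simps)
  then show "s * y \<in> {m + r * a | m r. m \<in> M}" by blast
qed

lemma exists_prime:
  fixes h :: "'b::comm_ring_1"
  assumes hn: "\<forall>n. h ^ n \<noteq> 0"
  shows "\<exists>P. is_prime P \<and> h \<notin> P"
proof -
  define S where "S = {I. is_ideal I \<and> (\<forall>n. h ^ n \<notin> I)}"
  have "\<exists>M\<in>S. \<forall>X\<in>S. M \<subseteq> X \<longrightarrow> X = M"
  proof (rule Zorn_Lemma2, intro ballI)
    fix C assume C: "C \<in> chains S"
    show "\<exists>U\<in>S. \<forall>X\<in>C. X \<subseteq> U"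
    proof (cases "C = {}")
      case True
      have "is_ideal {0::'b}" by (simp add: is_ideal_def)
      then have "{0} \<in> S" using hn by (simp add: S_def)
      then show ?thesis using True by blast
    next
      case False
      have CS: "C \<subseteq> S" using C by (rule chainsD2)
      have "is_ideal (\<Union>C)" unfolding is_ideal_def
      proof (intro conjI ballI allI)
        obtain X where "X \<in> C" using False by blast
        then have "0 \<in> X" using CS ideal_0 by (auto simp: S_def)
        then show "0 \<in> \<Union>C" using \<open>X \<in> C\<close> by blast
      next
        fix a b assume "a \<in> \<Union>C" "b \<in> \<Union>C"
        then obtain X Y where XY: "X \<in> C" "Y \<in> C" "a \<in> X" "b \<in> Y" by blast
        from chainsD[OF C XY(1,2)] show "a + b \<in> \<Union>C"
        proof
          assume "X \<subseteq> Y"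
          have "is_ideal Y" using XY(2) CS by (auto simp: S_def)
          then have "a + b \<in> Y" using XY \<open>X \<subseteq> Y\<close> ideal_add by blast
          then show ?thesis using XY by blast
        next
          assume "Y \<subseteq> X"
          have "is_ideal X" using XY(1) CS by (auto simp: S_def)
          then have "a + b \<in> X" using XY \<open>Y \<subseteq> X\<close> ideal_add by blast
          then show ?thesis using XY by blast
        qed
      next
        fix a r assume "a \<in> \<Union>C"
        then obtain X where "X \<in> C" "a \<in> X" by blast
        moreover have "is_ideal X" using \<open>X \<in> C\<close> CS by (auto simp: S_def)
        ultimately have "r * a \<in> X" using ideal_multl by blast
        then show "r * a \<in> \<Union>C" using \<open>X \<in> C\<close> by blast
      qed
      moreover have "\<forall>n. h ^ n \<notin> \<Union>C" using CS by (auto simp: S_def)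
      ultimately have "\<Union>C \<in> S" by (simp add: S_def)
      then show ?thesis by blast
    qed
  qed
  then obtain M where MS: "M \<in> S" and Mmax: "\<And>X. X \<in> S \<Longrightarrow> M \<subseteq> X \<Longrightarrow> X = M" by blast
  have I: "is_ideal M" and Mh: "\<And>n. h ^ n \<notin> M" using MS by (auto simp: S_def)
  have grow: "\<exists>n m r. m \<in> M \<and> h ^ n = m + r * a" if a: "a \<notin> M" for a
  proof -
    let ?Ma = "{m + r * a | m r. m \<in> M}"
    have Ma: "is_ideal ?Ma" by (rule ideal_ext[OF I])
    have sub: "M \<subseteq> ?Ma"
    proof
      fix y assume "y \<in> M"
      then show "y \<in> ?Ma" by (intro CollectI exI[of _ y] exI[of _ 0]) simp
    qed
    have "a \<in> ?Ma" using ideal_0[OF I] by (intro CollectI exI[of _ 0] exI[of _ 1]) simp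
    then have "?Ma \<noteq> M" using a by blast
    then have "?Ma \<notin> S" using Mmax sub by blast
    then obtain n where "h ^ n \<in> ?Ma" using Ma by (auto simp: S_def)
    then show ?thesis by blast
  qed
  have "is_prime M" unfolding is_prime_def
  proof (intro conjI allI impI)
    show "is_ideal M" by (rule I)
    show "1 \<notin> M" using Mh[of 0] by simp
  next
    fix a b assume ab: "a * b \<in> M"
    show "a \<in> M \<or> b \<in> M"
    proof (rule ccontr)
      assume "\<not> (a \<in> M \<or> b \<in> M)"
      then have "a \<notin> M" "b \<notin> M" by auto
      from grow[OF this(1)] obtain i m1 r1 where 1: "m1 \<in> M" "h ^ i = m1 + r1 * a" by blast
      from grow[OF \<open>b \<notin> M\<close>] obtain j m2 r2 where 2: "m2 \<in> M" "h ^ j = m2 + r2 * b" by blast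
      have "h ^ (i + j) = m1 * (m2 + r2 * b) + r1 * a * m2 + (r1 * r2) * (a * b)"
        using 1(2) 2(2) by (simp add: power_add algebra_simps)
      also have "\<dots> \<in> M"
        by (rule ideal_add[OF I ideal_add[OF I ideal_multr[OF I 1(1)] ideal_multl[OF I 2(1)]] ideal_multl[OF I ab]])
      finally show False using Mh by blast
    qed
  qed
  moreover have "h \<notin> M" using Mh[of 1] by simp
  ultimately show ?thesis by blast
qed

context kalg begin

lemma point:
  assumes ac: "alg_closed TYPE('a)" and fg: "finitely_generated iota" and hn: "\<forall>n. h ^ n \<noteq> 0"
  shows "\<exists>\<psi>. hom_on UNIV \<psi> \<and> \<psi> h \<noteq> 0"
proof -
  obtain P where P: "is_prime P" "h \<notin> P" using exists_prime[OF hn] by blast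
  obtain S where S: "finite S" "subalg_gen iota S = UNIV" using fg by (auto simp: finitely_generated_def)
  have "\<forall>v\<in>subalg_gen iota S. v \<notin> P \<longrightarrow>
     (\<exists>f. hom_on (subalg_gen iota S) f \<and> (\<forall>a\<in>subalg_gen iota S \<inter> P. f a = 0) \<and> f v \<noteq> 0)"
    by (rule main_ind[OF ac P(1) S(1)])
  then show ?thesis using P(2) S(2) by auto
qed

end


lemma pascal_sum:
  fixes a b :: "nat \<Rightarrow> 'b::comm_ring_1"
  shows "(\<Sum>i\<le>n. of_nat (n choose i) * (a i * b (Suc n - i) + a (Suc i) * b (n - i))) =
         (\<Sum>i\<le>Suc n. of_nat (Suc n choose i) * (a i * b (Suc n - i)))"
proof -
  define h where "h i = of_nat (n choose i) * (a i * b (Suc n - i))" for i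
  have "(\<Sum>i\<le>Suc n. h i) = (\<Sum>i\<le>n. h i) + h (Suc n)" by (rule sum.atMost_Suc)
  moreover have "h (Suc n) = 0"
  proof -
    have "n choose Suc n = 0" by (rule binomial_eq_0) simp
    then show ?thesis unfolding h_def by (simp only: of_nat_0 mult_zero_left)
  qed
  moreover have "(\<Sum>i\<le>Suc n. h i) = h 0 + (\<Sum>i\<le>n. h (Suc i))" by (rule sum.atMost_Suc_shift)
  ultimately have H: "(\<Sum>i\<le>n. h i) = h 0 + (\<Sum>i\<le>n. h (Suc i))" by simp
  have "(\<Sum>i\<le>Suc n. of_nat (Suc n choose i) * (a i * b (Suc n - i))) =
        of_nat (Suc n choose 0) * (a 0 * b (Suc n - 0)) + (\<Sum>i\<le>n. of_nat (Suc n choose Suc i) * (a (Suc i) * b (Suc n - Suc i)))"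
    by (rule sum.atMost_Suc_shift)
  also have "\<dots> = h 0 + (\<Sum>i\<le>n. h (Suc i) + of_nat (n choose i) * (a (Suc i) * b (n - i)))"
    by (simp add: h_def algebra_simps)
  also have "\<dots> = h 0 + (\<Sum>i\<le>n. h (Suc i)) + (\<Sum>i\<le>n. of_nat (n choose i) * (a (Suc i) * b (n - i)))"
    by (simp add: sum.distrib add.assoc)
  also have "\<dots> = (\<Sum>i\<le>n. h i) + (\<Sum>i\<le>n. of_nat (n choose i) * (a (Suc i) * b (n - i)))"
    using H by simp
  also have "\<dots> = (\<Sum>i\<le>n. of_nat (n choose i) * (a i * b (Suc n - i) + a (Suc i) * b (n - i)))"
    by (simp add: h_def sum.distrib distrib_left)
  finally show ?thesis by simp
qed

locale der = kalg iota for iota :: "'a::field_char_0 \<Rightarrow> 'b::comm_ring_1" +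
  fixes D :: "'b \<Rightarrow> 'b"
  assumes kd: "k_derivation iota D"
begin

lemma d_add: "D (a + b) = D a + D b" using kd unfolding k_derivation_def by blast
lemma d_mult: "D (a * b) = a * D b + b * D a" using kd unfolding k_derivation_def by blast
lemma d_iota_mult: "D (iota c * a) = iota c * D a" using kd unfolding k_derivation_def by blast
lemma d_0: "D 0 = 0" using d_add[of 0 0] by simp
lemma d_1: "D 1 = 0" using d_mult[of 1 1] by simp
lemma d_iota: "D (iota c) = 0" using d_iota_mult[of c 1] d_1 by simp
lemma d_sum: "D (sum g S) = (\<Sum>i\<in>S. D (g i))"
  by (induction S rule: infinite_finite_induct) (auto simp: d_0 d_add)
lemma d_nat_mult: "D (of_nat m * a) = of_nat m * D a"
  using d_iota_mult[of "of_nat m" a] iota_of_nat by simp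

lemma dn_add: "(D ^^ n) (a + b) = (D ^^ n) a + (D ^^ n) b"
  by (induction n) (auto simp: d_add)
lemma dn_0: "(D ^^ n) 0 = 0"
  by (induction n) (auto simp: d_0)
lemma dn_iota: "n > 0 \<Longrightarrow> (D ^^ n) (iota c) = 0"
proof (induction n)
  case 0 then show ?case by simp
next
  case (Suc n) then show ?case by (cases n) (auto simp: d_iota d_0)
qed
lemma dn_1: "n > 0 \<Longrightarrow> (D ^^ n) 1 = 0"
  using dn_iota[of n 1] iota_1 by simp

lemma leibniz: "(D ^^ n) (x * y) = (\<Sum>i\<le>n. of_nat (n choose i) * ((D ^^ i) x * (D ^^ (n - i)) y))"
proof (induction n)
  case 0 then show ?case by simp
next
  case (Suc n)
  have "(D ^^ Suc n) (x * y) = D (\<Sum>i\<le>n. of_nat (n choose i) * ((D ^^ i) x * (D ^^ (n - i)) y))"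
    using Suc by simp
  also have "\<dots> = (\<Sum>i\<le>n. of_nat (n choose i) * ((D ^^ i) x * (D ^^ (Suc n - i)) y + (D ^^ Suc i) x * (D ^^ (n - i)) y))"
  proof (unfold d_sum, rule sum.cong)
    fix i assume "i \<in> {..n}"
    then have "Suc n - i = Suc (n - i)" by simp
    then show "D (of_nat (n choose i) * ((D ^^ i) x * (D ^^ (n - i)) y)) =
      of_nat (n choose i) * ((D ^^ i) x * (D ^^ (Suc n - i)) y + (D ^^ Suc i) x * (D ^^ (n - i)) y)"
      by (simp only: d_nat_mult) (simp add: d_mult algebra_simps)
  qed simp
  also have "\<dots> = (\<Sum>i\<le>Suc n. of_nat (Suc n choose i) * ((D ^^ i) x * (D ^^ (Suc n - i)) y))"
    using pascal_sum[of n "\<lambda>i. (D ^^ i) x" "\<lambda>i. (D ^^ i) y"] by simp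
  finally show ?case .
qed

end


context kalg begin
lemma subr_UNIV: "subr UNIV" by (simp add: subr_def)
end

locale lnd_ctx = der iota D for iota :: "'a::field_char_0 \<Rightarrow> 'b::comm_ring_1" and D +
  fixes \<psi> :: "'b \<Rightarrow> 'a"
  assumes ln: "\<forall>x. \<exists>n. (D ^^ n) x = 0" and hp: "hom_on UNIV \<psi>"
begin

definition NN :: "'b \<Rightarrow> nat" where "NN b = (SOME n. (D ^^ n) b = 0)"
definition cf :: "'b \<Rightarrow> nat \<Rightarrow> 'a" where "cf b n = \<psi> ((D ^^ n) b) / fact n"
definition phi :: "'b \<Rightarrow> 'a poly" where "phi b = (\<Sum>n<NN b. monom (cf b n) n)"

lemma NN: "(D ^^ NN b) b = 0"
  unfolding NN_def by (rule someI_ex) (use ln in blast)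

lemma dn_ge: "m \<ge> NN b \<Longrightarrow> (D ^^ m) b = 0"
proof -
  assume m: "m \<ge> NN b"
  have "(D ^^ m) b = (D ^^ (m - NN b + NN b)) b" using m by simp
  also have "\<dots> = (D ^^ (m - NN b)) ((D ^^ NN b) b)" by (simp only: funpow_add comp_apply)
  also have "\<dots> = 0" by (simp only: NN dn_0)
  finally show ?thesis .
qed

lemma coeff_phi: "coeff (phi b) n = cf b n"
proof (cases "n < NN b")
  case True
  have "coeff (phi b) n = (\<Sum>i<NN b. if i = n then cf b i else 0)"
    unfolding phi_def coeff_sum by (simp add: coeff_monom)
  also have "\<dots> = cf b n" using True by (simp add: sum.delta)
  finally show ?thesis .
next
  case False
  have "coeff (phi b) n = (\<Sum>i<NN b. if i = n then cf b i else 0)"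
    unfolding phi_def coeff_sum by (simp add: coeff_monom)
  also have "\<dots> = 0" using False by (simp add: sum.delta)
  also have "0 = cf b n" using dn_ge[of b n] False hom_0[OF hp] by (simp add: cf_def)
  finally show ?thesis .
qed

lemma psi_nat: "\<psi> (of_nat m) = of_nat m"
  using hom_iota[OF hp, of "of_nat m"] iota_of_nat by simp

lemma phi_A1: "A1_morphism iota phi"
  unfolding A1_morphism_def
proof (intro conjI allI)
  show "phi 1 = 1"
  proof (rule poly_eqI)
    fix n show "coeff (phi 1) n = coeff 1 n"
    proof (cases n)
      case 0 then show ?thesis using hom_1[OF hp] by (simp add: coeff_phi cf_def)
    next
      case (Suc m)
      then have "(D ^^ n) 1 = 0" by (intro dn_1) simp
      then show ?thesis using Suc hom_0[OF hp] by (simp add: coeff_phi cf_def)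
    qed
  qed
next
  fix a b
  show "phi (a + b) = phi a + phi b"
  proof (rule poly_eqI)
    fix n show "coeff (phi (a + b)) n = coeff (phi a + phi b) n"
      using hom_add[OF hp, of "(D ^^ n) a" "(D ^^ n) b"]
      by (simp add: coeff_phi cf_def dn_add add_divide_distrib)
  qed
next
  fix a b
  show "phi (a * b) = phi a * phi b"
  proof (rule poly_eqI)
    fix n
    have "\<psi> ((D ^^ n) (a * b)) = (\<Sum>i\<le>n. \<psi> (of_nat (n choose i) * ((D ^^ i) a * (D ^^ (n - i)) b)))"
      unfolding leibniz by (rule hom_sum[OF subr_UNIV hp]) simp
    also have "\<dots> = (\<Sum>i\<le>n. of_nat (n choose i) * (\<psi> ((D ^^ i) a) * \<psi> ((D ^^ (n - i)) b)))"
      using hom_mult[OF hp] psi_nat by simp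
    finally have e: "\<psi> ((D ^^ n) (a * b)) = (\<Sum>i\<le>n. of_nat (n choose i) * (\<psi> ((D ^^ i) a) * \<psi> ((D ^^ (n - i)) b)))" .
    have "cf (a * b) n = (\<Sum>i\<le>n. of_nat (n choose i) * (\<psi> ((D ^^ i) a) * \<psi> ((D ^^ (n - i)) b)) / fact n)"
      unfolding cf_def e by (rule sum_divide_distrib)
    also have "\<dots> = (\<Sum>i\<le>n. cf a i * cf b (n - i))"
    proof (rule sum.cong)
      fix i assume "i \<in> {..n}"
      then have "i \<le> n" by simp
      then have bf: "(of_nat (n choose i) :: 'a) = fact n / (fact i * fact (n - i))" by (rule binomial_fact)
      show "of_nat (n choose i) * (\<psi> ((D ^^ i) a) * \<psi> ((D ^^ (n - i)) b)) / fact n = cf a i * cf b (n - i)"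
        unfolding bf cf_def by (simp add: field_simps)
    qed simp
    finally show "coeff (phi (a * b)) n = coeff (phi a * phi b) n"
      by (simp add: coeff_phi coeff_mult)
  qed
next
  fix c
  show "phi (iota c) = [:c:]"
  proof (rule poly_eqI)
    fix n show "coeff (phi (iota c)) n = coeff [:c:] n"
    proof (cases n)
      case 0 then show ?thesis using hom_iota[OF hp] by (simp add: coeff_phi cf_def)
    next
      case (Suc m)
      then have "(D ^^ n) (iota c) = 0" by (intro dn_iota) simp
      then show ?thesis using Suc hom_0[OF hp] by (simp add: coeff_phi cf_def)
    qed
  qed
qed

lemma phi_coeff1: "coeff (phi f) 1 = \<psi> (D f)"
  by (simp add: coeff_phi cf_def)

end

theorem proposition6p10:
  fixes iota :: "'a::field_char_0 \<Rightarrow> 'b::comm_ring_1"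
  assumes "alg_closed TYPE('a)"
    and "k_algebra_map iota"
    and "finitely_generated iota"
    and "reduced TYPE('b)"
  shows "O_ch iota \<subseteq> makar_limanov iota \<and> (makar_limanov iota = range iota \<longrightarrow> O_ch iota = range iota)"
proof -
  interpret K: kalg iota by (rule kalg.intro) (rule assms(2))
  have sub: "O_ch iota \<subseteq> makar_limanov iota"
  proof
    fix f assume f: "f \<in> O_ch iota"
    show "f \<in> makar_limanov iota" unfolding makar_limanov_def
    proof (rule InterI, clarify)
      fix D assume D: "D \<in> LND iota"
      then have kd: "k_derivation iota D" and ln: "\<forall>x. \<exists>n. (D ^^ n) x = 0" by (auto simp: LND_def)
      show "D f = 0"
      proof (rule ccontr)
        assume nz: "D f \<noteq> 0"
        have hn: "\<forall>n. D f ^ n \<noteq> 0" using nz assms(4) unfolding reduced_def by blast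
        obtain \<psi> where hp: "K.hom_on UNIV \<psi>" and pD: "\<psi> (D f) \<noteq> 0"
          using K.point[OF assms(1) assms(3) hn] by blast
        interpret L: lnd_ctx iota D \<psi>
          using assms(2) kd ln hp by (simp add: lnd_ctx_def lnd_ctx_axioms_def der_def der_axioms_def kalg_def)
        have "L.phi \<in> {\<phi>. A1_morphism iota \<phi>}" using L.phi_A1 by simp
        then have "f \<in> O_ch_g iota L.phi" using f unfolding O_ch_def by blast
        then obtain c where "L.phi f = [:c:]" unfolding O_ch_g_def by blast
        then have "coeff (L.phi f) 1 = 0" by simp
        then show False using L.phi_coeff1 pD by simp
      qed
    qed
  qed
  have "range iota \<subseteq> O_ch iota"
    unfolding O_ch_def O_ch_g_def A1_morphism_def by blast
  then show ?thesis using sub by blast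
qed

end
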